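(* Let $(S,\circ)$ be a right loop with identity $1$, with group torsion $G_S$ and associated group $G_SS\le\mathrm{Sym}(S)$, and let $\sigma(S)$ be the stability relation on $S$. Then $N_{G_SS}(N_{G_SS}(G_S))=G_SS$ if and only if $\sigma(S)$ is a congruence on $S$ and, for all $y,z\in S$, $\{(x,\,x\,\theta^S f^S(y,z)) \mid x \in S\} \subseteq \sigma(S)$.
   Context: A right loop is a set $S$ with a binary operation $\circ$ having a two-sided identity $1$ such that for all $a,b\in S$ the equation $X\circ a=b$ has a unique solution $X\in S$. A right subloop of $S$ is a nonempty subset which is a right loop under the induced operation. A congruence on $S$ is an equivalence relation $R\subseteq S\times S$ which is a right subloop of $S\times S$ (with componentwise operation $(a,b)\circ(c,d)=(a\circ c,b\circ d)$). Products in $\mathrm{Sym}(S)$ follow the convention $(rs)(x)=s(r(x))$. For $u\in S$, $R_u\in\mathrm{Sym}(S)$ is $R_u(x)=x\circ u$, and $G_SS=\langle R_x : x\in S\rangle\le\mathrm{Sym}(S)$; $S$ is identified with $\{R_x: x\in S\}\subseteq G_SS$. For $y,z\in S$, $f^S(y,z)\in \mathrm{Sym}(S)$ is defined by: $f^S(y,z)(x)$ is the unique solution $X$ of $X\circ(y\circ z)=(x\circ y)\circ z$ (equivalently $f^S(y,z)=R_yR_zR_{y\circ z}^{-1}$). The group torsion $G_S$ is the subgroup of $\mathrm{Sym}(S)$ generated by all $f^S(y,z)$; it is a subgroup of $G_SS$. $G_S$ acts on $S$ via $x\,\theta^S h=h(x)$. $G_SS$ acts on $S$ by $x\star p=p(x)$,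 $\mathrm{stab}(G_SS,u)$ denotes the stabilizer of $u$, and the stability relation is $\sigma(S)=\{(x,y)\in S\times S \mid \mathrm{stab}(G_SS,x)=\mathrm{stab}(G_SS,y)\}$. *)

theory Defs
  imports "HOL-Combinatorics.Permutations"
begin

definition right_loop :: "'a set \<Rightarrow> ('a \<Rightarrow> 'a \<Rightarrow> 'a) \<Rightarrow> 'a \<Rightarrow> bool" where
  "right_loop S op e \<longleftrightarrow> e \<in> S \<and> (\<forall>a\<in>S. \<forall>b\<in>S. op a b \<in> S)
     \<and> (\<forall>a\<in>S. op e a = a \<and> op a e = a)
     \<and> (\<forall>a\<in>S. \<forall>b\<in>S. \<exists>!X. X \<in> S \<and> op X a = b)"

definition right_subloop :: "'a set \<Rightarrow> ('a \<Rightarrow> 'a \<Rightarrow> 'a) \<Rightarrow> 'a set \<Rightarrow> bool" where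
  "right_subloop S op T \<longleftrightarrow> T \<subseteq> S \<and> T \<noteq> {} \<and> (\<exists>e'. right_loop T op e')"

definition pair_op :: "('a \<Rightarrow> 'a \<Rightarrow> 'a) \<Rightarrow> 'a \<times> 'a \<Rightarrow> 'a \<times> 'a \<Rightarrow> 'a \<times> 'a" where
  "pair_op op p q = (op (fst p) (fst q), op (snd p) (snd q))"

definition congruence :: "'a set \<Rightarrow> ('a \<Rightarrow> 'a \<Rightarrow> 'a) \<Rightarrow> ('a \<times> 'a) set \<Rightarrow> bool" where
  "congruence S op R \<longleftrightarrow> equiv S R \<and> right_subloop (S \<times> S) (pair_op op) R"

text \<open>Elements of Sym(S) are represented as functions permuting S (identity outside S).
  The product r s of the paper (first r, then s) is s \<circ> r.\<close>
inductive_set perm_gen :: "('a \<Rightarrow> 'a) set \<Rightarrow> ('a \<Rightarrow> 'a) set" for A where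
  gen_id: "id \<in> perm_gen A"
| gen_base: "a \<in> A \<Longrightarrow> a \<in> perm_gen A"
| gen_comp: "p \<in> perm_gen A \<Longrightarrow> q \<in> perm_gen A \<Longrightarrow> q \<circ> p \<in> perm_gen A"
| gen_inv: "p \<in> perm_gen A \<Longrightarrow> inv p \<in> perm_gen A"

definition Rmul :: "'a set \<Rightarrow> ('a \<Rightarrow> 'a \<Rightarrow> 'a) \<Rightarrow> 'a \<Rightarrow> 'a \<Rightarrow> 'a" where
  "Rmul S op u = (\<lambda>x. if x \<in> S then op x u else x)"

definition GSS :: "'a set \<Rightarrow> ('a \<Rightarrow> 'a \<Rightarrow> 'a) \<Rightarrow> ('a \<Rightarrow> 'a) set" where
  "GSS S op = perm_gen (Rmul S op ` S)"

definition ftors :: "'a set \<Rightarrow> ('a \<Rightarrow> 'a \<Rightarrow> 'a) \<Rightarrow> 'a \<Rightarrow> 'a \<Rightarrow> 'a \<Rightarrow> 'a" where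
  "ftors S op y z = (\<lambda>x. if x \<in> S then (THE X. X \<in> S \<and> op X (op y z) = op (op x y) z) else x)"

definition GS :: "'a set \<Rightarrow> ('a \<Rightarrow> 'a \<Rightarrow> 'a) \<Rightarrow> ('a \<Rightarrow> 'a) set" where
  "GS S op = perm_gen {ftors S op y z | y z. y \<in> S \<and> z \<in> S}"

text \<open>Normalizer of H in G: g with g H g^-1 = H; in the paper's convention
  (g h g^-1)(x) = g^-1(h(g x)).\<close>
definition normalizer :: "('a \<Rightarrow> 'a) set \<Rightarrow> ('a \<Rightarrow> 'a) set \<Rightarrow> ('a \<Rightarrow> 'a) set" where
  "normalizer G H = {g \<in> G. (\<lambda>h. inv g \<circ> h \<circ> g) ` H = H}"

definition stab :: "('a \<Rightarrow> 'a) set \<Rightarrow> 'a \<Rightarrow> ('a \<Rightarrow> 'a) set" where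
  "stab G u = {p \<in> G. p u = u}"

definition stability_rel :: "'a set \<Rightarrow> ('a \<Rightarrow> 'a \<Rightarrow> 'a) \<Rightarrow> ('a \<times> 'a) set" where
  "stability_rel S op = {(x, y). x \<in> S \<and> y \<in> S \<and> stab (GSS S op) x = stab (GSS S op) y}"

end

theory Submission
  imports Defs
begin

definition okp :: "'a set \<Rightarrow> ('a \<Rightarrow> 'a) \<Rightarrow> bool" where
  "okp S p \<longleftrightarrow> bij p \<and> (\<forall>x. x \<notin> S \<longrightarrow> p x = x)"

lemma okp_inS: "okp S p \<Longrightarrow> x \<in> S \<Longrightarrow> p x \<in> S"
  unfolding okp_def by (metis bij_is_inj injD)

lemma okp_inv: "okp S p \<Longrightarrow> okp S (inv p)"
  unfolding okp_def by (metis bij_imp_bij_inv bij_is_inj inv_f_eq)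

lemma okp_comp: "okp S p \<Longrightarrow> okp S q \<Longrightarrow> okp S (q \<circ> p)"
  unfolding okp_def by (simp add: bij_comp)

lemma perm_gen_okp: assumes "\<And>a. a \<in> A \<Longrightarrow> okp S a" and "p \<in> perm_gen A" shows "okp S p"
  using assms(2)
proof (induction p rule: perm_gen.induct)
  case gen_id then show ?case by (simp add: okp_def bij_id[unfolded id_def])
next
  case (gen_base a) then show ?case using assms(1) by blast
next
  case (gen_comp p q) then show ?case by (blast intro: okp_comp)
next
  case (gen_inv p) then show ?case by (blast intro: okp_inv)
qed

locale rloop =
  fixes S :: "'a set" and op :: "'a \<Rightarrow> 'a \<Rightarrow> 'a" and e :: 'a
  assumes RL: "right_loop S op e"
begin

abbreviation "R \<equiv> Rmul S op"
abbreviation "G \<equiv> GSS S op"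
abbreviation "H \<equiv> GS S op"
abbreviation "N \<equiv> normalizer G H"
abbreviation "sig \<equiv> stability_rel S op"

lemma e_in: "e \<in> S" using RL unfolding right_loop_def by blast
lemma op_in: "a \<in> S \<Longrightarrow> b \<in> S \<Longrightarrow> op a b \<in> S" using RL unfolding right_loop_def by blast
lemma op_e_left[simp]: "a \<in> S \<Longrightarrow> op e a = a" using RL unfolding right_loop_def by blast
lemma op_e_right[simp]: "a \<in> S \<Longrightarrow> op a e = a" using RL unfolding right_loop_def by blast
lemma div_ex1: "a \<in> S \<Longrightarrow> b \<in> S \<Longrightarrow> \<exists>!X. X \<in> S \<and> op X a = b"
  using RL unfolding right_loop_def by blast
lemma div_ex: "a \<in> S \<Longrightarrow> b \<in> S \<Longrightarrow> \<exists>X\<in>S. op X a = b"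
  using div_ex1 by blast
lemma div_uniq: "a \<in> S \<Longrightarrow> X \<in> S \<Longrightarrow> Y \<in> S \<Longrightarrow> op X a = op Y a \<Longrightarrow> X = Y"
proof -
  assume a: "a \<in> S" "X \<in> S" "Y \<in> S" "op X a = op Y a"
  have "\<exists>!Z. Z \<in> S \<and> op Z a = op X a" using a op_in div_ex1 by blast
  then show "X = Y" using a by (metis (no_types, lifting))
qed

lemma R_in[simp]: "x \<in> S \<Longrightarrow> R u x = op x u" by (simp add: Rmul_def)
lemma R_out[simp]: "x \<notin> S \<Longrightarrow> R u x = x" by (simp add: Rmul_def)

lemma R_bij: assumes u: "u \<in> S" shows "bij (R u)"
proof (rule bijI)
  show "inj (R u)"
  proof (rule injI)
    fix x y assume h: "R u x = R u y"
    show "x = y"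
    proof (cases "x \<in> S"; cases "y \<in> S")
      assume "x \<in> S" "y \<in> S" then show ?thesis using h u div_uniq by simp
    next
      assume "x \<in> S" "y \<notin> S" then show ?thesis using h u op_in by (metis R_in R_out)
    next
      assume "x \<notin> S" "y \<in> S" then show ?thesis using h u op_in by (metis R_in R_out)
    next
      assume "x \<notin> S" "y \<notin> S" then show ?thesis using h by simp
    qed
  qed
  show "surj (R u)"
  proof (rule surjI)
    fix y
    show "R u (if y \<in> S then (THE X. X \<in> S \<and> op X u = y) else y) = y"
    proof (cases "y \<in> S")
      case True
      then have "(THE X. X \<in> S \<and> op X u = y) \<in> S \<and> op (THE X. X \<in> S \<and> op X u = y) u = y"
        using theI'[OF div_ex1[OF u True]] by blast
      then show ?thesis using True by simp
    qed simp
  qed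
qed

lemma R_okp: "u \<in> S \<Longrightarrow> okp S (R u)"
  unfolding okp_def using R_bij by simp

lemma R_G: "u \<in> S \<Longrightarrow> R u \<in> G"
  unfolding GSS_def by (rule gen_base) simp

lemma G_okp: "p \<in> G \<Longrightarrow> okp S p"
  unfolding GSS_def by (rule perm_gen_okp) (auto intro: R_okp)

lemma G_bij: "p \<in> G \<Longrightarrow> bij p" using G_okp okp_def by blast
lemma G_inS: "p \<in> G \<Longrightarrow> x \<in> S \<Longrightarrow> p x \<in> S" by (rule okp_inS[OF G_okp])
lemma G_comp: "p \<in> G \<Longrightarrow> q \<in> G \<Longrightarrow> q \<circ> p \<in> G" unfolding GSS_def by (rule gen_comp)
lemma G_inv: "p \<in> G \<Longrightarrow> inv p \<in> G" unfolding GSS_def by (rule gen_inv)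
lemma G_id: "id \<in> G" unfolding GSS_def by (rule gen_id)

lemma H_comp: "p \<in> H \<Longrightarrow> q \<in> H \<Longrightarrow> q \<circ> p \<in> H" unfolding GS_def by (rule gen_comp)
lemma H_inv: "p \<in> H \<Longrightarrow> inv p \<in> H" unfolding GS_def by (rule gen_inv)
lemma H_id: "id \<in> H" unfolding GS_def by (rule gen_id)
lemma f_H: "y \<in> S \<Longrightarrow> z \<in> S \<Longrightarrow> ftors S op y z \<in> H" unfolding GS_def by (rule gen_base) blast

lemma ftors_prop: assumes "y \<in> S" "z \<in> S" "x \<in> S"
  shows "ftors S op y z x \<in> S \<and> op (ftors S op y z x) (op y z) = op (op x y) z"
proof -
  have "\<exists>!X. X \<in> S \<and> op X (op y z) = op (op x y) z" using assms by (intro div_ex1 op_in)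
  from theI'[OF this] show ?thesis using assms by (simp add: ftors_def)
qed

lemma ftors_eq: assumes "y \<in> S" "z \<in> S"
  shows "R (op y z) \<circ> ftors S op y z = R z \<circ> R y"
proof
  fix x show "(R (op y z) \<circ> ftors S op y z) x = (R z \<circ> R y) x"
  proof (cases "x \<in> S")
    case True then show ?thesis using ftors_prop[OF assms True] assms op_in by simp
  next
    case False then show ?thesis by (simp add: ftors_def)
  qed
qed

lemma ftors_G: assumes "y \<in> S" "z \<in> S" shows "ftors S op y z \<in> G"
proof -
  have b: "bij (R (op y z))" using assms op_in R_bij by blast
  have "ftors S op y z = (inv (R (op y z)) \<circ> R (op y z)) \<circ> ftors S op y z"
    using b by (simp add: bij_is_inj)
  also have "\<dots> = inv (R (op y z)) \<circ> (R z \<circ> R y)" using ftors_eq[OF assms] by (metis comp_assoc)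
  moreover have "inv (R (op y z)) \<circ> (R z \<circ> R y) \<in> G"
    using assms op_in by (intro G_comp G_inv R_G) auto
  ultimately show ?thesis by simp
qed

lemma H_G: "p \<in> H \<Longrightarrow> p \<in> G"
  unfolding GS_def
proof (induction p rule: perm_gen.induct)
  case gen_id then show ?case by (rule G_id)
next
  case (gen_base a) then show ?case using ftors_G by blast
next
  case (gen_comp p q) then show ?case by (blast intro: G_comp)
next
  case (gen_inv p) then show ?case by (blast intro: G_inv)
qed

lemma H_fix: "h \<in> H \<Longrightarrow> h e = e"
proof -
  assume hH: "h \<in> H"
  then show ?thesis unfolding GS_def
  proof (induction h rule: perm_gen.induct)
    case gen_id then show ?case by simp
  next
    case (gen_base a)
    then obtain y z where a: "a = ftors S op y z" "y \<in> S" "z \<in> S" by blast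
    have "a e \<in> S \<and> op (a e) (op y z) = op (op e y) z" using ftors_prop[OF a(2,3) e_in] a by simp
    then have "op (a e) (op y z) = op e (op y z)" using a e_in op_in by simp
    then show ?case using div_uniq[of "op y z" "a e" e] a op_in e_in ftors_prop[OF a(2,3) e_in] by blast
  next
    case (gen_comp p q) then show ?case by simp
  next
    case (gen_inv p)
    have "bij p" using gen_inv(1) H_G G_bij unfolding GS_def by blast
    then show ?case using gen_inv(2) by (simp add: bij_is_inj inv_f_eq)
  qed
qed

lemma R_e: "R e = id"
  by (rule ext) (simp add: Rmul_def)

lemma R_apply_e: "x \<in> S \<Longrightarrow> R x e = x" using e_in by simp

end

context rloop
begin

definition "T = {w. \<exists>s\<in>S. \<exists>h\<in>H. w = R s \<circ> h}"

lemma T_gen: assumes x: "x \<in> S" and w: "w \<in> T"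
  shows "R x \<circ> w \<in> T \<and> inv (R x) \<circ> w \<in> T"
proof -
  obtain s h where sh: "s \<in> S" "h \<in> H" "w = R s \<circ> h" using w unfolding T_def by blast
  have 1: "R x \<circ> w = R (op s x) \<circ> (ftors S op s x \<circ> h)"
    using ftors_eq[OF sh(1) x] sh(3) by (metis comp_assoc)
  have A: "R x \<circ> w \<in> T" unfolding T_def using 1 op_in[OF sh(1) x] H_comp[OF sh(2) f_H[OF sh(1) x]] by blast
  obtain t where t: "t \<in> S" "op t x = s" using div_ex[OF x sh(1)] by blast
  have fb: "bij (ftors S op t x)" using ftors_G[OF t(1) x] G_bij by blast
  have Rxb: "bij (R x)" using R_bij x by blast
  have eq: "R s \<circ> ftors S op t x = R x \<circ> R t" using ftors_eq[OF t(1) x] t(2) by simp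
  have "inv (R x) \<circ> R s = inv (R x) \<circ> R s \<circ> (ftors S op t x \<circ> inv (ftors S op t x))"
  proof -
    have "ftors S op t x \<circ> inv (ftors S op t x) = id" using fb bij_is_surj surj_iff by blast
    then show ?thesis by simp
  qed
  also have "\<dots> = inv (R x) \<circ> (R s \<circ> ftors S op t x) \<circ> inv (ftors S op t x)"
    by (simp add: comp_assoc)
  also have "\<dots> = (inv (R x) \<circ> R x) \<circ> R t \<circ> inv (ftors S op t x)"
    using eq by (simp add: comp_assoc)
  also have "\<dots> = R t \<circ> inv (ftors S op t x)" using Rxb by (simp add: bij_is_inj)
  finally have "inv (R x) \<circ> w = R t \<circ> (inv (ftors S op t x) \<circ> h)" using sh(3) by (metis comp_assoc)
  then have "inv (R x) \<circ> w \<in> T" unfolding T_def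
    using t(1) H_comp[OF sh(2) H_inv[OF f_H[OF t(1) x]]] by blast
  then show ?thesis using A by blast
qed

lemma T_all: assumes "g \<in> G" shows "\<forall>w\<in>T. g \<circ> w \<in> T \<and> inv g \<circ> w \<in> T"
  using assms unfolding GSS_def
proof (induction g rule: perm_gen.induct)
  case gen_id then show ?case by simp
next
  case (gen_base a) then show ?case using T_gen by blast
next
  case (gen_comp p q)
  have bp: "bij p" and bq: "bij q" using gen_comp(1,2) G_bij unfolding GSS_def by blast+
  have "inv (q \<circ> p) = inv p \<circ> inv q" using bp bq by (simp add: o_inv_distrib)
  show ?case
  proof
    fix w assume w: "w \<in> T"
    have "q \<circ> (p \<circ> w) \<in> T" using gen_comp.IH w by blast
    moreover have "inv p \<circ> (inv q \<circ> w) \<in> T" using gen_comp.IH w by blast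
    ultimately show "(q \<circ> p) \<circ> w \<in> T \<and> inv (q \<circ> p) \<circ> w \<in> T"
      using \<open>inv (q \<circ> p) = inv p \<circ> inv q\<close> by (simp add: comp_assoc)
  qed
next
  case (gen_inv p)
  have bp: "bij p" using gen_inv(1) G_bij unfolding GSS_def by blast
  then show ?case using gen_inv.IH by (simp add: inv_inv_eq)
qed

lemma decomp: assumes "g \<in> G" shows "\<exists>s\<in>S. \<exists>h\<in>H. g = R s \<circ> h"
proof -
  have "id \<in> T" unfolding T_def using e_in H_id R_e by force
  then have "g \<circ> id \<in> T" using T_all[OF assms] by blast
  then show ?thesis unfolding T_def by simp
qed

lemma H_eq: "H = {p \<in> G. p e = e}"
proof
  show "H \<subseteq> {p \<in> G. p e = e}" using H_G H_fix by blast
  show "{p \<in> G. p e = e} \<subseteq> H"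
  proof
    fix g assume "g \<in> {p \<in> G. p e = e}"
    then have g: "g \<in> G" "g e = e" by auto
    obtain s h where sh: "s \<in> S" "h \<in> H" "g = R s \<circ> h" using decomp[OF g(1)] by blast
    have "g e = s" using sh H_fix[OF sh(2)] e_in by simp
    then have "s = e" using g by simp
    then show "g \<in> H" using sh R_e by simp
  qed
qed

lemma sig_iff: "(x, y) \<in> sig \<longleftrightarrow> x \<in> S \<and> y \<in> S \<and> (\<forall>p\<in>G. p x = x \<longleftrightarrow> p y = y)"
  unfolding stability_rel_def stab_def by auto

lemma sig_refl: "x \<in> S \<Longrightarrow> (x, x) \<in> sig" by (simp add: sig_iff)
lemma sig_sym: "(x, y) \<in> sig \<Longrightarrow> (y, x) \<in> sig" by (auto simp add: sig_iff)
lemma sig_trans: "(x, y) \<in> sig \<Longrightarrow> (y, z) \<in> sig \<Longrightarrow> (x, z) \<in> sig" by (auto simp add: sig_iff)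
lemma sig_S: "(x, y) \<in> sig \<Longrightarrow> x \<in> S \<and> y \<in> S" by (auto simp add: sig_iff)

lemma conj_fix: assumes "bij g" shows "p (g x) = g x \<longleftrightarrow> (inv g \<circ> p \<circ> g) x = x"
  using assms by (metis bij_inv_eq_iff comp_apply)

lemma INV: assumes g: "g \<in> G" and xy: "(x, y) \<in> sig" shows "(g x, g y) \<in> sig"
proof -
  have b: "bij g" using g G_bij by blast
  have S: "x \<in> S" "y \<in> S" using xy sig_S by auto
  have "\<forall>p\<in>G. p (g x) = g x \<longleftrightarrow> p (g y) = g y"
  proof
    fix p assume p: "p \<in> G"
    have "inv g \<circ> p \<circ> g \<in> G" using G_comp G_inv g p by blast
    then show "p (g x) = g x \<longleftrightarrow> p (g y) = g y" using conj_fix[OF b] xy unfolding sig_iff by blast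
  qed
  then show ?thesis using S G_inS[OF g] by (simp add: sig_iff)
qed

lemma Ginv_app: "g \<in> G \<Longrightarrow> inv g (g x) = x" using G_bij by (simp add: bij_is_inj)
lemma Gapp_inv: "g \<in> G \<Longrightarrow> g (inv g x) = x" using G_bij by (simp add: bij_is_surj surj_f_inv_f)

lemma Nchar: "g \<in> N \<longleftrightarrow> g \<in> G \<and> (e, g e) \<in> sig"
proof
  assume gN: "g \<in> N"
  then have g: "g \<in> G" and cj: "(\<lambda>h. inv g \<circ> h \<circ> g) ` H = H" unfolding normalizer_def by auto
  have ig: "inv g \<in> G" using G_inv g by blast
  have "\<forall>p\<in>G. p e = e \<longleftrightarrow> p (inv g e) = inv g e"
  proof
    fix p assume p: "p \<in> G"
    show "p e = e \<longleftrightarrow> p (inv g e) = inv g e"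
    proof
      assume "p e = e"
      then have "p \<in> H" using H_eq p by blast
      then obtain q where q: "q \<in> H" "p = inv g \<circ> q \<circ> g" using cj by blast
      then show "p (inv g e) = inv g e" using H_fix[OF q(1)] q(2) Gapp_inv[OF g] by simp
    next
      assume pe: "p (inv g e) = inv g e"
      have "g \<circ> p \<circ> inv g \<in> G" using G_comp p g ig by blast
      moreover have "(g \<circ> p \<circ> inv g) e = e" using pe Gapp_inv[OF g] by simp
      ultimately have "g \<circ> p \<circ> inv g \<in> H" using H_eq by blast
      then have "inv g \<circ> (g \<circ> p \<circ> inv g) \<circ> g \<in> H" using cj by blast
      moreover have "inv g \<circ> (g \<circ> p \<circ> inv g) \<circ> g = p"
        by (rule ext) (simp add: Ginv_app[OF g] Gapp_inv[OF g])
      ultimately show "p e = e" using H_fix by auto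
    qed
  qed
  then have "(e, inv g e) \<in> sig" using e_in G_inS[OF ig e_in] by (simp add: sig_iff)
  from INV[OF g this] have "(g e, e) \<in> sig" using Gapp_inv[OF g] by simp
  then show "g \<in> G \<and> (e, g e) \<in> sig" using g sig_sym by blast
next
  assume a: "g \<in> G \<and> (e, g e) \<in> sig"
  then have g: "g \<in> G" and s: "(e, g e) \<in> sig" by auto
  have ig: "inv g \<in> G" using G_inv g by blast
  have s2: "(e, inv g e) \<in> sig" using INV[OF ig sig_sym[OF s]] Ginv_app[OF g] by (simp add: sig_sym)
  have "(\<lambda>h. inv g \<circ> h \<circ> g) ` H = H"
  proof
    show "(\<lambda>h. inv g \<circ> h \<circ> g) ` H \<subseteq> H"
    proof
      fix k assume "k \<in> (\<lambda>h. inv g \<circ> h \<circ> g) ` H"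
      then obtain h where h: "h \<in> H" "k = inv g \<circ> h \<circ> g" by blast
      have "h (g e) = g e" using h H_fix H_G s sig_iff by blast
      then have "k e = e" using h Ginv_app[OF g] by simp
      moreover have "k \<in> G" using h H_G G_comp g ig by blast
      ultimately show "k \<in> H" using H_eq by blast
    qed
    show "H \<subseteq> (\<lambda>h. inv g \<circ> h \<circ> g) ` H"
    proof
      fix h assume h: "h \<in> H"
      have "h (inv g e) = inv g e" using h H_fix H_G s2 sig_iff by blast
      then have "(g \<circ> h \<circ> inv g) e = e" using Gapp_inv[OF g] by simp
      moreover have "g \<circ> h \<circ> inv g \<in> G" using h H_G G_comp g ig by blast
      ultimately have "g \<circ> h \<circ> inv g \<in> H" using H_eq by blast
      moreover have "h = inv g \<circ> (g \<circ> h \<circ> inv g) \<circ> g"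
        by (rule ext) (simp add: Ginv_app[OF g] Gapp_inv[OF g])
      ultimately show "h \<in> (\<lambda>h. inv g \<circ> h \<circ> g) ` H" by blast
    qed
  qed
  then show "g \<in> N" using g unfolding normalizer_def by blast
qed

end

lemma normalizer_eq_iff: "normalizer G X = G \<longleftrightarrow> (\<forall>g\<in>G. (\<lambda>h. inv g \<circ> h \<circ> g) ` X = X)"
  unfolding normalizer_def by blast

context rloop
begin

definition "NK \<longleftrightarrow> (\<forall>n\<in>N. \<forall>x\<in>S. (x, n x) \<in> sig)"

lemma N_G: "n \<in> N \<Longrightarrow> n \<in> G" using Nchar by blast

lemma normal_imp_NK: assumes nrm: "\<forall>g\<in>G. (\<lambda>h. inv g \<circ> h \<circ> g) ` N = N" shows NK
  unfolding NK_def
proof (intro ballI)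
  fix n x assume n: "n \<in> N" and x: "x \<in> S"
  let ?g = "R x"
  have g: "?g \<in> G" using R_G x by blast
  have "inv ?g \<circ> n \<circ> ?g \<in> N" using nrm g n by blast
  then have "(e, (inv ?g \<circ> n \<circ> ?g) e) \<in> sig" using Nchar by blast
  then have "(e, inv ?g (n x)) \<in> sig" using R_apply_e x by simp
  from INV[OF g this] show "(x, n x) \<in> sig" using R_apply_e x Gapp_inv[OF g] by simp
qed

lemma NK_conj: assumes nk: NK and g: "g \<in> G" and n: "n \<in> N" shows "inv g \<circ> n \<circ> g \<in> N"
proof -
  have ig: "inv g \<in> G" using G_inv g by blast
  have "(g e, n (g e)) \<in> sig" using nk n G_inS[OF g e_in] unfolding NK_def by blast
  from INV[OF ig this] have "(e, (inv g \<circ> n \<circ> g) e) \<in> sig" using Ginv_app[OF g] by simp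
  moreover have "inv g \<circ> n \<circ> g \<in> G" using G_comp N_G[OF n] g ig by blast
  ultimately show ?thesis using Nchar by blast
qed

lemma NK_imp_normal: assumes nk: NK shows "\<forall>g\<in>G. (\<lambda>h. inv g \<circ> h \<circ> g) ` N = N"
proof
  fix g assume g: "g \<in> G"
  have ig: "inv g \<in> G" using G_inv g by blast
  show "(\<lambda>h. inv g \<circ> h \<circ> g) ` N = N"
  proof
    show "(\<lambda>h. inv g \<circ> h \<circ> g) ` N \<subseteq> N" using NK_conj[OF nk g] by blast
    show "N \<subseteq> (\<lambda>h. inv g \<circ> h \<circ> g) ` N"
    proof
      fix n assume n: "n \<in> N"
      have "inv (inv g) \<circ> n \<circ> inv g \<in> N" using NK_conj[OF nk ig n] .
      then have m: "g \<circ> n \<circ> inv g \<in> N" using G_bij[OF g] by (simp add: inv_inv_eq)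
      have "n = inv g \<circ> (g \<circ> n \<circ> inv g) \<circ> g"
        by (rule ext) (simp add: Ginv_app[OF g] Gapp_inv[OF g])
      then show "n \<in> (\<lambda>h. inv g \<circ> h \<circ> g) ` N" using m by blast
    qed
  qed
qed

lemma L: assumes nk: NK and yy: "(y, y') \<in> sig" and x: "x \<in> S"
  shows "(op x y, op x y') \<in> sig"
proof -
  have y: "y \<in> S" "y' \<in> S" using yy sig_S by auto
  have Ry: "R y \<in> G" "inv (R y) \<in> G" using R_G G_inv y by blast+
  let ?g = "inv (R y) \<circ> R y'"
  have g: "?g \<in> G" using G_comp R_G y Ry by blast
  have "(inv (R y) y, inv (R y) y') \<in> sig" using INV[OF Ry(2) yy] .
  moreover have "inv (R y) y = e" using Ginv_app[OF Ry(1), of e] R_apply_e y by simp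
  ultimately have "(e, ?g e) \<in> sig" using R_apply_e y by simp
  then have "?g \<in> N" using Nchar g by blast
  then have "(x, ?g x) \<in> sig" using nk x unfolding NK_def by blast
  from INV[OF Ry(1) this] show ?thesis using Gapp_inv[OF Ry(1)] x by simp
qed

lemma NK_imp_cong: assumes nk: NK shows "congruence S op sig"
proof -
  have eq: "equiv S sig"
    unfolding equiv_def refl_on_def sym_def trans_def
  proof (intro conjI allI impI ballI subsetI)
    fix p assume "p \<in> sig" then show "p \<in> S \<times> S" using sig_S by (cases p) auto
  next
    fix x assume "x \<in> S" then show "(x, x) \<in> sig" by (rule sig_refl)
  next
    fix x y assume "(x, y) \<in> sig" then show "(y, x) \<in> sig" by (rule sig_sym)
  next
    fix x y z assume "(x, y) \<in> sig" "(y, z) \<in> sig" then show "(x, z) \<in> sig" by (rule sig_trans)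
  qed
  have ee: "(e, e) \<in> sig" using sig_refl e_in by blast
  have clos: "\<forall>a\<in>sig. \<forall>b\<in>sig. pair_op op a b \<in> sig"
  proof (intro ballI)
    fix a b assume a: "a \<in> sig" and b: "b \<in> sig"
    obtain x x' y y' where xy: "a = (x, x')" "b = (y, y')" by (cases a, cases b) auto
    have S: "x \<in> S" "x' \<in> S" "y \<in> S" "y' \<in> S" using a b xy sig_S by auto
    have "(R y x, R y x') \<in> sig" using INV[OF R_G[OF S(3)]] a xy by simp
    then have 1: "(op x y, op x' y) \<in> sig" using S by simp
    have 2: "(op x' y, op x' y') \<in> sig" using L[OF nk _ S(2)] b xy by simp
    show "pair_op op a b \<in> sig" using sig_trans[OF 1 2] xy by (simp add: pair_op_def)
  qed
  have idt: "\<forall>a\<in>sig. pair_op op (e, e) a = a \<and> pair_op op a (e, e) = a"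
    using sig_S by (auto simp: pair_op_def)
  have dv: "\<forall>a\<in>sig. \<forall>b\<in>sig. \<exists>!X. X \<in> sig \<and> pair_op op X a = b"
  proof (intro ballI)
    fix a b assume a: "a \<in> sig" and b: "b \<in> sig"
    obtain c d c' d' where cd: "a = (c, d)" "b = (c', d')" by (cases a, cases b) auto
    have S: "c \<in> S" "d \<in> S" "c' \<in> S" "d' \<in> S" using a b cd sig_S by auto
    obtain u where u: "u \<in> S" "op u c = c'" using div_ex S by blast
    obtain v where v: "v \<in> S" "op v d = d'" using div_ex S by blast
    obtain a' where a': "a' \<in> S" "op a' c = d'" using div_ex S by blast
    have Rc: "R c \<in> G" "inv (R c) \<in> G" using R_G G_inv S by blast+
    have iu: "inv (R c) c' = u" using Ginv_app[OF Rc(1), of u] u by simp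
    have ia: "inv (R c) d' = a'" using Ginv_app[OF Rc(1), of a'] a' by simp
    have 1: "(u, a') \<in> sig" using INV[OF Rc(2), of c' d'] b cd iu ia by simp
    have "(op v c, op v d) \<in> sig" using L[OF nk _ v(1)] a cd by simp
    then have "(R c v, R c a') \<in> sig" using v a' S by simp
    from INV[OF Rc(2) this] have 2: "(v, a') \<in> sig" using Ginv_app[OF Rc(1)] by simp
    have uv: "(u, v) \<in> sig" using sig_trans[OF 1 sig_sym[OF 2]] .
    show "\<exists>!X. X \<in> sig \<and> pair_op op X a = b"
    proof (rule ex1I[of _ "(u, v)"])
      show "(u, v) \<in> sig \<and> pair_op op (u, v) a = b" using uv u v cd by (simp add: pair_op_def)
    next
      fix X assume X: "X \<in> sig \<and> pair_op op X a = b"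
      obtain p q where pq: "X = (p, q)" by (cases X) auto
      have "p \<in> S" "q \<in> S" using X pq sig_S by auto
      moreover have "op p c = op u c" "op q d = op v d" using X pq cd u v by (auto simp: pair_op_def)
      ultimately show "X = (u, v)" using div_uniq S u v pq by metis
    qed
  qed
  have "right_loop sig (pair_op op) (e, e)"
    unfolding right_loop_def using ee clos idt dv by blast
  moreover have "sig \<subseteq> S \<times> S" using sig_S by auto
  ultimately have "right_subloop (S \<times> S) (pair_op op) sig"
    unfolding right_subloop_def using ee by blast
  then show ?thesis unfolding congruence_def using eq by blast
qed

lemma NK_imp_f: assumes nk: NK
  shows "\<forall>y\<in>S. \<forall>z\<in>S. {(x, ftors S op y z x) | x. x \<in> S} \<subseteq> sig"
proof (intro ballI subsetI)
  fix y z p assume y: "y \<in> S" and z: "z \<in> S" and p: "p \<in> {(x, ftors S op y z x) | x. x \<in> S}"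
  have fH: "ftors S op y z \<in> H" using f_H y z by blast
  have "ftors S op y z \<in> N" using Nchar H_G[OF fH] H_fix[OF fH] sig_refl e_in by simp
  then show "p \<in> sig" using p nk unfolding NK_def by blast
qed

lemma RHS_imp_NK:
  assumes cg: "congruence S op sig"
    and fc: "\<forall>y\<in>S. \<forall>z\<in>S. {(x, ftors S op y z x) | x. x \<in> S} \<subseteq> sig"
  shows NK
proof -
  obtain e' where "right_loop sig (pair_op op) e'"
    using cg unfolding congruence_def right_subloop_def by blast
  then have clos: "\<And>a b. a \<in> sig \<Longrightarrow> b \<in> sig \<Longrightarrow> pair_op op a b \<in> sig"
    unfolding right_loop_def by blast
  have Hs: "\<And>h x. h \<in> H \<Longrightarrow> x \<in> S \<Longrightarrow> (x, h x) \<in> sig"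
  proof -
    fix h x assume h: "h \<in> H" and x: "x \<in> S"
    from h have "\<forall>x\<in>S. (x, h x) \<in> sig" unfolding GS_def
    proof (induction h rule: perm_gen.induct)
      case gen_id then show ?case using sig_refl by simp
    next
      case (gen_base a) then show ?case using fc by blast
    next
      case (gen_comp p q)
      have "p \<in> G" using gen_comp(1) H_G unfolding GS_def by blast
      then show ?case using gen_comp.IH G_inS sig_trans by (metis comp_apply)
    next
      case (gen_inv p)
      have pG: "p \<in> G" using gen_inv(1) H_G unfolding GS_def by blast
      show ?case
      proof
        fix x assume x: "x \<in> S"
        have "inv p x \<in> S" using G_inS[OF G_inv[OF pG] x] .
        then have "(inv p x, p (inv p x)) \<in> sig" using gen_inv.IH by blast
        then show "(x, inv p x) \<in> sig" using Gapp_inv[OF pG] sig_sym by simp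
      qed
    qed
    then show "(x, h x) \<in> sig" using x by blast
  qed
  show NK unfolding NK_def
  proof (intro ballI)
    fix n x assume n: "n \<in> N" and x: "x \<in> S"
    obtain s h where sh: "s \<in> S" "h \<in> H" "n = R s \<circ> h" using decomp N_G[OF n] by blast
    have "n e = s" using sh H_fix[OF sh(2)] e_in by simp
    then have es: "(e, s) \<in> sig" using Nchar n by blast
    have hx: "h x \<in> S" using G_inS[OF H_G[OF sh(2)] x] .
    have 1: "(x, h x) \<in> sig" using Hs sh x by blast
    have "pair_op op (h x, h x) (e, s) \<in> sig" using clos sig_refl[OF hx] es by blast
    then have 2: "(h x, op (h x) s) \<in> sig" using hx by (simp add: pair_op_def)
    show "(x, n x) \<in> sig" using sig_trans[OF 1 2] sh hx by simp
  qed
qed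

lemma main: "normalizer G N = G \<longleftrightarrow> congruence S op sig
   \<and> (\<forall>y\<in>S. \<forall>z\<in>S. {(x, ftors S op y z x) | x. x \<in> S} \<subseteq> sig)"
  unfolding normalizer_eq_iff
  using normal_imp_NK NK_imp_normal NK_imp_cong NK_imp_f RHS_imp_NK by blast

end

theorem mainTheorem2:
  fixes S :: "'a set" and op :: "'a \<Rightarrow> 'a \<Rightarrow> 'a" and e :: 'a
  assumes "right_loop S op e"
  shows "normalizer (GSS S op) (normalizer (GSS S op) (GS S op)) = GSS S op
    \<longleftrightarrow> congruence S op (stability_rel S op)
        \<and> (\<forall>y\<in>S. \<forall>z\<in>S. {(x, ftors S op y z x) | x. x \<in> S} \<subseteq> stability_rel S op)"
proof -
  interpret rloop S op e by unfold_locales (rule assms)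
  show ?thesis by (rule main)
qed

end
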